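(* Let $\mathbb{H}$ be the random $3$-partite $3$-uniform hypergraph on vertex set $V_1\cup V_2\cup V_3$ with $|V_1|=|V_2|=|V_3|=n$, in which each triple containing exactly one vertex from each $V_i$ is an edge independently with probability $1/2$. Then there exists a constant $\gamma>0$ such that with high probability $\mathbb{H}$ contains at least $\gamma n^2$ pairwise edge-disjoint perfect matchings.
   Context: A perfect matching of the hypergraph is a set of pairwise disjoint edges covering all $3n$ vertices. "With high probability" means with probability tending to $1$ as $n\to\infty$. *)

theory Defs
  imports "HOL-Probability.Probability"
begin

text \<open>Vertex classes V_1, V_2, V_3 are copies of {0..<n}; a vertex is a pair (i, x)
  with i \<in> {0,1,2} the class index and x < n. A crossing triple (a,b,c) has
  a \<in> V_1, b \<in> V_2, c \<in> V_3.\<close>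

definition triples :: "nat \<Rightarrow> (nat \<times> nat \<times> nat) set" where
  "triples n = {0..<n} \<times> {0..<n} \<times> {0..<n}"

definition vertices :: "nat \<Rightarrow> (nat \<times> nat) set" where
  "vertices n = {0,1,2} \<times> {0..<n}"

fun verts :: "nat \<times> nat \<times> nat \<Rightarrow> (nat \<times> nat) set" where
  "verts (a, b, c) = {(0, a), (1, b), (2, c)}"

definition perfect_matching :: "nat \<Rightarrow> (nat \<times> nat \<times> nat) set \<Rightarrow> (nat \<times> nat \<times> nat) set \<Rightarrow> bool" where
  "perfect_matching n H M \<longleftrightarrow>
     M \<subseteq> H \<and>
     (\<forall>e\<in>M. \<forall>f\<in>M. e \<noteq> f \<longrightarrow> verts e \<inter> verts f = {}) \<and>
     (\<Union>e\<in>M. verts e) = vertices n"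

definition random_hypergraph :: "nat \<Rightarrow> (nat \<times> nat \<times> nat) set pmf" where
  "random_hypergraph n =
     map_pmf (\<lambda>X. {e \<in> triples n. X e}) (Pi_pmf (triples n) False (\<lambda>_. bernoulli_pmf (1/2)))"

end

theory Submission imports Defs "HOL-Number_Theory.Cong" "HOL-Real_Asymp.Real_Asymp" begin

lemma prob_bad:
  assumes S: "S \<subseteq> triples n" "S \<noteq> {}"
  shows "measure_pmf.prob (random_hypergraph n) {H. real (card (H \<inter> S)) \<le> real (card S) / 4}
           \<le> exp (- real (card S) / 8)"
proof -
  define T where "T = triples n"
  define P where "P = (\<lambda>_::nat \<times> nat \<times> nat. bernoulli_pmf (1/2))"
  have finT: "finite T" unfolding T_def triples_def by simp
  have finS: "finite S" using S finT finite_subset unfolding T_def by blast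
  define m where "m = card S"
  have m: "m > 0" unfolding m_def using S finS by (simp add: card_gt_0_iff)
  have "measure_pmf.prob (random_hypergraph n) {H. real (card (H \<inter> S)) \<le> real m / 4}
      = measure_pmf.prob (Pi_pmf T False P) {X. real (card {e\<in>S. X e}) \<le> real m / 4}"
  proof -
    have "(\<lambda>X. {e \<in> T. X e}) -` {H. real (card (H \<inter> S)) \<le> real m / 4}
          = {X. real (card {e\<in>S. X e}) \<le> real m / 4}"
    proof -
      have "{e \<in> T. X e} \<inter> S = {e\<in>S. X e}" for X using S unfolding T_def by auto
      thus ?thesis by auto
    qed
    thus ?thesis unfolding random_hypergraph_def T_def[symmetric] P_def[symmetric]
      by (simp add: measure_map_pmf)
  qed
  also have "\<dots> = measure_pmf.prob (Pi_pmf S False P) {X. real (card {e\<in>S. X e}) \<le> real m / 4}"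
  proof -
    have "Pi_pmf S False P = map_pmf (\<lambda>f x. if x \<in> S then f x else False) (Pi_pmf T False P)"
      by (rule Pi_pmf_subset) (use finT S in \<open>auto simp: T_def\<close>)
    moreover have "(\<lambda>f x. if x \<in> S then f x else False) -` {X. real (card {e\<in>S. X e}) \<le> real m / 4}
          = {X. real (card {e\<in>S. X e}) \<le> real m / 4}"
    proof -
      have "{e\<in>S. (if e \<in> S then f e else False)} = {e\<in>S. f e}" for f by auto
      thus ?thesis by auto
    qed
    ultimately show ?thesis by (simp add: measure_map_pmf)
  qed
  also have "\<dots> = measure_pmf.prob (binomial_pmf m (1/2)) {x. real x \<le> real m / 4}"
  proof -
    have "binomial_pmf m (1/2) = map_pmf (\<lambda>f. card {x\<in>S. f x}) (Pi_pmf S False P)"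
      unfolding P_def by (rule binomial_pmf_altdef') (use finS m_def in auto)
    thus ?thesis by (simp add: measure_map_pmf vimage_def)
  qed
  also have "\<dots> = measure_pmf.prob (binomial_pmf m (1/2)) {x. real x \<le> real m * (1/2) - real m / 4}"
    by (rule arg_cong[where f = "measure_pmf.prob _"]) auto
  also have "\<dots> \<le> exp (- 2 * (real m / 4)\<^sup>2 / real m)"
    by (rule binomial_distribution.prob_le) (use m in \<open>auto simp: binomial_distribution_def\<close>)
  also have "- 2 * (real m / 4)\<^sup>2 / real m = - real m / 8"
    using m by (simp add: power2_eq_square field_simps)
  finally show ?thesis unfolding m_def .
qed



lemma hall:
  fixes N :: "'a \<Rightarrow> 'b set"
  assumes "finite X" "\<forall>x\<in>X. finite (N x)" "\<forall>A\<subseteq>X. card A \<le> card (\<Union>(N ` A))"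
  shows "\<exists>f. inj_on f X \<and> (\<forall>x\<in>X. f x \<in> N x)"
  using assms
proof (induction "card X" arbitrary: X N rule: less_induct)
  case less
  note fin = less.prems(1) and finN = less.prems(2) and hallc = less.prems(3)
  show ?case
  proof (cases "X = {}")
    case True then show ?thesis by auto
  next
    case False
    show ?thesis
    proof (cases "\<exists>A. A \<subseteq> X \<and> A \<noteq> {} \<and> A \<noteq> X \<and> card A = card (\<Union>(N ` A))")
      case True
      then obtain A where A: "A \<subseteq> X" "A \<noteq> {}" "A \<noteq> X" "card A = card (\<Union>(N ` A))" by blast
      define Y where "Y = \<Union>(N ` A)"
      have finA: "finite A" using A(1) fin finite_subset by blast
      have finY: "finite Y" unfolding Y_def using finA finN A(1) by blast
      have c1: "card A < card X" using A fin by (meson psubsetI psubset_card_mono)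
      have "\<exists>f. inj_on f A \<and> (\<forall>x\<in>A. f x \<in> N x)"
        by (rule less.hyps[OF c1 finA]) (use A(1) finN hallc in auto)
      then obtain f1 where f1: "inj_on f1 A" "\<forall>x\<in>A. f1 x \<in> N x" by blast
      have finXA: "finite (X - A)" using fin by blast
      have c2: "card (X - A) < card X" using A fin
        by (metis Diff_subset Int_absorb1 card_Diff_subset_Int card_seteq diff_less finA finite_Diff
            linorder_not_le not_gr_zero card_0_eq psubsetI psubset_card_mono Diff_disjoint Diff_eq_empty_iff inf_commute)
      have hall2: "\<forall>B\<subseteq>X - A. card B \<le> card (\<Union>((\<lambda>x. N x - Y) ` B))"
      proof (intro allI impI)
        fix B assume B: "B \<subseteq> X - A"
        have finB: "finite B" using B finXA finite_subset by blast
        have eq: "\<Union>((\<lambda>x. N x - Y) ` B) = \<Union>(N ` (B \<union> A)) - Y" unfolding Y_def by auto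
        have sub: "Y \<subseteq> \<Union>(N ` (B \<union> A))" unfolding Y_def by auto
        have finU: "finite (\<Union>(N ` (B \<union> A)))" using finB finA finN B A(1) by blast
        have "card (\<Union>(N ` (B \<union> A)) - Y) = card (\<Union>(N ` (B \<union> A))) - card Y"
          using card_Diff_subset[OF finY sub] .
        moreover have "card (B \<union> A) \<le> card (\<Union>(N ` (B \<union> A)))"
          using hallc[rule_format, of "B \<union> A"] B A(1) by blast
        moreover have "card (B \<union> A) = card B + card A" using B finB finA by (subst card_Un_disjoint) auto
        ultimately show "card B \<le> card (\<Union>((\<lambda>x. N x - Y) ` B))" using eq A(4) unfolding Y_def by simp
      qed
      have "\<exists>f. inj_on f (X - A) \<and> (\<forall>x\<in>X - A. f x \<in> N x - Y)"
        by (rule less.hyps[OF c2 finXA]) (use finN hall2 in auto)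
      then obtain f2 where f2: "inj_on f2 (X - A)" "\<forall>x\<in>X - A. f2 x \<in> N x - Y" by blast
      define f where "f = (\<lambda>x. if x \<in> A then f1 x else f2 x)"
      have "inj_on f X"
      proof (rule inj_onI)
        fix x y assume xy: "x \<in> X" "y \<in> X" "f x = f y"
        show "x = y"
        proof (cases "x \<in> A"; cases "y \<in> A")
          assume "x \<in> A" "y \<in> A" then show ?thesis using xy f1(1) unfolding f_def by (auto dest: inj_onD)
        next
          assume "x \<notin> A" "y \<notin> A" then show ?thesis using xy f2(1) unfolding f_def by (auto dest: inj_onD)
        next
          assume a: "x \<in> A" "y \<notin> A"
          have "f1 x \<in> Y" using a f1(2) unfolding Y_def by auto
          moreover have "f2 y \<notin> Y" using a xy f2(2) by auto
          ultimately show ?thesis using xy a unfolding f_def by auto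
        next
          assume a: "x \<notin> A" "y \<in> A"
          have "f1 y \<in> Y" using a f1(2) unfolding Y_def by auto
          moreover have "f2 x \<notin> Y" using a xy f2(2) by auto
          ultimately show ?thesis using xy a unfolding f_def by auto
        qed
      qed
      moreover have "\<forall>x\<in>X. f x \<in> N x" using f1(2) f2(2) unfolding f_def by auto
      ultimately show ?thesis by blast
    next
      case False2: False
      obtain x where x: "x \<in> X" using False by blast
      have "card {x} \<le> card (N x)" using hallc[rule_format, of "{x}"] x by simp
      hence "N x \<noteq> {}" by auto
      then obtain y where y: "y \<in> N x" by blast
      have c1: "card (X - {x}) < card X" using x fin by (meson card_Diff1_less)
      have hall2: "\<forall>B\<subseteq>X - {x}. card B \<le> card (\<Union>((\<lambda>z. N z - {y}) ` B))"
      proof (intro allI impI)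
        fix B assume B: "B \<subseteq> X - {x}"
        show "card B \<le> card (\<Union>((\<lambda>z. N z - {y}) ` B))"
        proof (cases "B = {}")
          case True then show ?thesis by simp
        next
          case False
          have "B \<noteq> X" using B x by auto
          hence "card B \<noteq> card (\<Union>(N ` B))" using False2 False B by auto
          moreover have "card B \<le> card (\<Union>(N ` B))" using hallc B by auto
          moreover have "\<Union>((\<lambda>z. N z - {y}) ` B) = \<Union>(N ` B) - {y}" by auto
          moreover have "card (\<Union>(N ` B)) - 1 \<le> card (\<Union>(N ` B) - {y})"
            using diff_card_le_card_Diff[of "{y}" "\<Union>(N ` B)"] by simp
          ultimately show ?thesis by simp
        qed
      qed
      have "\<exists>f. inj_on f (X - {x}) \<and> (\<forall>z\<in>X - {x}. f z \<in> N z - {y})"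
        by (rule less.hyps[OF c1]) (use fin finN hall2 in auto)
      then obtain g where g: "inj_on g (X - {x})" "\<forall>z\<in>X - {x}. g z \<in> N z - {y}" by blast
      define f where "f = g(x := y)"
      have "inj_on f X"
      proof (rule inj_onI)
        fix u v assume uv: "u \<in> X" "v \<in> X" "f u = f v"
        show "u = v"
          using uv g unfolding f_def by (cases "u = x"; cases "v = x") (auto dest: inj_onD)
      qed
      moreover have "\<forall>z\<in>X. f z \<in> N z" using g(2) y unfolding f_def by auto
      ultimately show ?thesis by blast
    qed
  qed
qed

lemma pm_exists:
  fixes G :: "(nat \<times> nat) set"
  assumes G: "G \<subseteq> {..<n} \<times> {..<n}"
  and s: "1 \<le> s" "s \<le> n"
  and degL: "\<forall>a<n. s \<le> card {b. (a,b) \<in> G}"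
  and degR: "\<forall>b<n. s \<le> card {a. (a,b) \<in> G}"
  and rect: "\<forall>A B. A \<subseteq> {..<n} \<longrightarrow> B \<subseteq> {..<n} \<longrightarrow> card A = s \<longrightarrow> card B = s \<longrightarrow> (\<exists>a\<in>A. \<exists>b\<in>B. (a,b)\<in>G)"
  shows "\<exists>f. inj_on f {..<n} \<and> (\<forall>a<n. (a, f a) \<in> G)"
proof -
  define N where "N = (\<lambda>a. {b. (a,b) \<in> G})"
  have NS: "N a \<subseteq> {..<n}" for a using G unfolding N_def by auto
  have "\<forall>A\<subseteq>{..<n}. card A \<le> card (\<Union>(N ` A))"
  proof (intro allI impI)
    fix A assume A: "A \<subseteq> {..<n}"
    define NA where "NA = \<Union>(N ` A)"
    have NAs: "NA \<subseteq> {..<n}" using NS unfolding NA_def by auto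
    have finA: "finite A" using A finite_subset by blast
    show "card A \<le> card (\<Union>(N ` A))"
    proof (cases "card A \<le> s")
      case True
      show ?thesis
      proof (cases "A = {}")
        case True then show ?thesis by simp
      next
        case False
        then obtain a where a: "a \<in> A" by blast
        have "N a \<subseteq> NA" using a unfolding NA_def by auto
        hence "card (N a) \<le> card NA" using NAs by (meson card_mono finite_lessThan finite_subset)
        moreover have "s \<le> card (N a)" using degL a A unfolding N_def by auto
        ultimately show ?thesis using True unfolding NA_def by simp
      qed
    next
      case False
      have small: "card ({..<n} - NA) < s"
      proof (rule ccontr)
        assume "\<not> card ({..<n} - NA) < s"
        hence "s \<le> card ({..<n} - NA)" by simp
        then obtain B where B: "B \<subseteq> {..<n} - NA" "card B = s"
          by (rule obtain_subset_with_card_n)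
        have "s \<le> card A" using False by simp
        then obtain A' where A': "A' \<subseteq> A" "card A' = s"
          by (rule obtain_subset_with_card_n)
        have "A' \<subseteq> {..<n}" "B \<subseteq> {..<n}" using A' A B by auto
        then obtain a b where ab: "a \<in> A'" "b \<in> B" "(a,b) \<in> G"
          using rect A' B by blast
        have "b \<in> NA" using ab A' unfolding NA_def N_def by auto
        thus False using ab B by auto
      qed
      have cNA: "card NA + card ({..<n} - NA) = n"
        proof -
        have "finite NA" using NAs finite_subset by blast
        hence "card ({..<n} - NA) = n - card NA" using NAs card_Diff_subset by fastforce
        moreover have "card NA \<le> n" using NAs by (metis card_lessThan card_mono finite_lessThan)
        ultimately show ?thesis by simp
      qed
      show ?thesis
      proof (cases "card A + s \<le> n")
        case True then show ?thesis using small cNA unfolding NA_def by linarith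
      next
        case False2: False
        have smallA: "card ({..<n} - A) < s"
          using A False2 s(1) by (simp add: card_Diff_subset finite_subset)
        have "NA = {..<n}"
        proof (rule ccontr)
          assume "NA \<noteq> {..<n}"
          then obtain b where b: "b < n" "b \<notin> NA" using NAs by auto
          have "{a. (a,b) \<in> G} \<subseteq> {..<n} - A" using b G unfolding NA_def N_def by auto
          hence "card {a. (a,b) \<in> G} \<le> card ({..<n} - A)" by (simp add: card_mono)
          thus False using degR b smallA by fastforce
        qed
        thus ?thesis using A unfolding NA_def by (metis card_lessThan card_mono finite_lessThan)
      qed
    qed
  qed
  moreover have "\<forall>x\<in>{..<n}. finite (N x)" using NS finite_subset by blast
  ultimately obtain f where f: "inj_on f {..<n}" "\<forall>x\<in>{..<n}. f x \<in> N x"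
    using hall[of "{..<n}" N] by blast
  thus ?thesis unfolding N_def by auto
qed

lemma card_le_k_sum:
  assumes "finite I" "\<forall>i\<in>I. card (S i) \<le> m"
  shows "card (\<Union>i\<in>I. S i) \<le> card I * m"
proof -
  have "card (\<Union>i\<in>I. S i) \<le> (\<Sum>i\<in>I. card (S i))" using assms(1) by (rule card_UN_le)
  also have "\<dots> \<le> of_nat (card I) * m" by (rule sum_bounded_above) (use assms(2) in auto)
  finally show ?thesis by simp
qed

lemma many_pm:
  fixes G :: "(nat \<times> nat) set"
  assumes G: "G \<subseteq> {..<n} \<times> {..<n}"
  and s1: "1 \<le> s" and sn: "real s \<le> real n / 8"
  and degL: "\<forall>a<n. real n / 4 < real (card {b. (a,b) \<in> G})"
  and degR: "\<forall>b<n. real n / 4 < real (card {a. (a,b) \<in> G})"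
  and rect: "\<forall>A B. A \<subseteq> {..<n} \<longrightarrow> B \<subseteq> {..<n} \<longrightarrow> card A = s \<longrightarrow> card B = s \<longrightarrow>
                real s ^ 2 / 4 < real (card ((A \<times> B) \<inter> G))"
  and k: "real k \<le> real s / 4"
  shows "\<exists>\<sigma>. \<forall>j<k. inj_on (\<sigma> j) {..<n} \<and> (\<forall>a<n. (a, \<sigma> j a) \<in> G) \<and>
              (\<forall>j'<k. j' \<noteq> j \<longrightarrow> (\<forall>a<n. \<sigma> j a \<noteq> \<sigma> j' a))"
  using k
proof (induction k)
  case 0 then show ?case by simp
next
  case (Suc k)
  have kk: "real k \<le> real s / 4 - 1" using Suc.prems by simp
  hence "real k \<le> real s / 4" by simp
  then obtain \<sigma> where \<sigma>: "\<forall>j<k. inj_on (\<sigma> j) {..<n} \<and> (\<forall>a<n. (a, \<sigma> j a) \<in> G) \<and>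
              (\<forall>j'<k. j' \<noteq> j \<longrightarrow> (\<forall>a<n. \<sigma> j a \<noteq> \<sigma> j' a))"
    using Suc.IH by blast
  define R where "R = {(a, \<sigma> j a) | a j. j < k}"
  define G' where "G' = G - R"
  have G'G: "G' \<subseteq> {..<n} \<times> {..<n}" using G unfolding G'_def by auto
  have sn': "s \<le> n" using sn by linarith
  have finL: "finite {b. (a,b) \<in> H}" if "H \<subseteq> {..<n} \<times> {..<n}" for a H
    by (rule finite_subset[of _ "{..<n}"]) (use that in auto)
  have finR: "finite {a. (a,b) \<in> H}" if "H \<subseteq> {..<n} \<times> {..<n}" for b H
    by (rule finite_subset[of _ "{..<n}"]) (use that in auto)
  have dL: "\<forall>a<n. s \<le> card {b. (a,b) \<in> G'}"
  proof (intro allI impI)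
    fix a assume a: "a < n"
    have "{b. (a,b) \<in> G} \<subseteq> {b. (a,b) \<in> G'} \<union> (\<lambda>j. \<sigma> j a) ` {..<k}"
      unfolding G'_def R_def by auto
    hence "card {b. (a,b) \<in> G} \<le> card ({b. (a,b) \<in> G'} \<union> (\<lambda>j. \<sigma> j a) ` {..<k})"
      by (intro card_mono) (use finL[OF G'G] in auto)
    also have "\<dots> \<le> card {b. (a,b) \<in> G'} + card ((\<lambda>j. \<sigma> j a) ` {..<k})" by (rule card_Un_le)
    also have "card ((\<lambda>j. \<sigma> j a) ` {..<k}) \<le> k" by (metis card_image_le card_lessThan finite_lessThan)
    finally have "card {b. (a,b) \<in> G} \<le> card {b. (a,b) \<in> G'} + k" by simp
    hence "real (card {b. (a,b) \<in> G}) \<le> real (card {b. (a,b) \<in> G'}) + real k" by linarith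
    moreover have "real n / 4 < real (card {b. (a,b) \<in> G})" using degL a by blast
    ultimately have "real s \<le> real (card {b. (a,b) \<in> G'})" using kk sn by linarith
    thus "s \<le> card {b. (a,b) \<in> G'}" by linarith
  qed
  have dR: "\<forall>b<n. s \<le> card {a. (a,b) \<in> G'}"
  proof (intro allI impI)
    fix b assume b: "b < n"
    have "{a. (a,b) \<in> G} \<subseteq> {a. (a,b) \<in> G'} \<union> (\<Union>j\<in>{..<k}. {a. a < n \<and> \<sigma> j a = b})"
      using G unfolding G'_def R_def by auto
    hence "card {a. (a,b) \<in> G} \<le> card ({a. (a,b) \<in> G'} \<union> (\<Union>j\<in>{..<k}. {a. a < n \<and> \<sigma> j a = b}))"
      by (intro card_mono) (use finR[OF G'G] in auto)
    also have "\<dots> \<le> card {a. (a,b) \<in> G'} + card (\<Union>j\<in>{..<k}. {a. a < n \<and> \<sigma> j a = b})" by (rule card_Un_le)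
    also have "card (\<Union>j\<in>{..<k}. {a. a < n \<and> \<sigma> j a = b}) \<le> card {..<k} * 1"
    proof (rule card_le_k_sum)
      show "\<forall>i\<in>{..<k}. card {a. a < n \<and> \<sigma> i a = b} \<le> 1"
      proof
        fix i assume i: "i \<in> {..<k}"
        have "inj_on (\<sigma> i) {..<n}" using \<sigma> i by auto
        hence "\<forall>x\<in>{a. a < n \<and> \<sigma> i a = b}. \<forall>y\<in>{a. a < n \<and> \<sigma> i a = b}. x = y"
          by (auto dest: inj_onD)
        thus "card {a. a < n \<and> \<sigma> i a = b} \<le> 1" using card_le_Suc0_iff_eq[of "{a. a < n \<and> \<sigma> i a = b}"] by simp
      qed
    qed simp
    finally have "card {a. (a,b) \<in> G} \<le> card {a. (a,b) \<in> G'} + k" by simp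
    hence "real (card {a. (a,b) \<in> G}) \<le> real (card {a. (a,b) \<in> G'}) + real k" by linarith
    moreover have "real n / 4 < real (card {a. (a,b) \<in> G})" using degR b by blast
    ultimately have "real s \<le> real (card {a. (a,b) \<in> G'})" using kk sn by linarith
    thus "s \<le> card {a. (a,b) \<in> G'}" by linarith
  qed
  have rc: "\<forall>A B. A \<subseteq> {..<n} \<longrightarrow> B \<subseteq> {..<n} \<longrightarrow> card A = s \<longrightarrow> card B = s \<longrightarrow> (\<exists>a\<in>A. \<exists>b\<in>B. (a,b)\<in>G')"
  proof (intro allI impI)
    fix A B assume A: "A \<subseteq> {..<n}" and B: "B \<subseteq> {..<n}" and cA: "card A = s" and cB: "card B = s"
    have finA: "finite A" using A finite_subset by blast
    have finAB: "finite ((A \<times> B) \<inter> G')" by (rule finite_subset[of _ "{..<n} \<times> {..<n}"]) (use G'G in auto)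
    have "(A \<times> B) \<inter> G \<subseteq> ((A \<times> B) \<inter> G') \<union> (\<Union>j\<in>{..<k}. (\<lambda>a. (a, \<sigma> j a)) ` A)"
      unfolding G'_def R_def by auto
    hence "card ((A \<times> B) \<inter> G) \<le> card (((A \<times> B) \<inter> G') \<union> (\<Union>j\<in>{..<k}. (\<lambda>a. (a, \<sigma> j a)) ` A))"
      by (intro card_mono) (use finAB finA in auto)
    also have "\<dots> \<le> card ((A \<times> B) \<inter> G') + card (\<Union>j\<in>{..<k}. (\<lambda>a. (a, \<sigma> j a)) ` A)" by (rule card_Un_le)
    also have "card (\<Union>j\<in>{..<k}. (\<lambda>a. (a, \<sigma> j a)) ` A) \<le> card {..<k} * s"
      by (rule card_le_k_sum) (use cA card_image_le finA in auto)
    finally have "card ((A \<times> B) \<inter> G) \<le> card ((A \<times> B) \<inter> G') + k * s" by simp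
    hence "real (card ((A \<times> B) \<inter> G)) \<le> real (card ((A \<times> B) \<inter> G')) + real k * real s"
      by (metis of_nat_add of_nat_le_iff of_nat_mult)
    moreover have "real s ^ 2 / 4 < real (card ((A \<times> B) \<inter> G))" using rect A B cA cB by blast
    moreover have "real k * real s \<le> (real s / 4 - 1) * real s" by (rule mult_right_mono) (use kk in auto)
    ultimately have "0 < real (card ((A \<times> B) \<inter> G'))" by (simp add: power2_eq_square algebra_simps)
    hence "(A \<times> B) \<inter> G' \<noteq> {}" by auto
    thus "\<exists>a\<in>A. \<exists>b\<in>B. (a,b)\<in>G'" by auto
  qed
  obtain \<tau> where \<tau>: "inj_on \<tau> {..<n}" "\<forall>a<n. (a, \<tau> a) \<in> G'"
    using pm_exists[OF G'G s1 sn' dL dR rc] by blast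
  define \<sigma>' where "\<sigma>' = \<sigma>(k := \<tau>)"
  have nR: "\<tau> a \<noteq> \<sigma> j a" if "j < k" "a < n" for j a
  proof
    assume "\<tau> a = \<sigma> j a"
    hence "(a, \<tau> a) \<in> R" unfolding R_def using that by auto
    thus False using \<tau>(2) that unfolding G'_def by auto
  qed
  have "\<forall>j<Suc k. inj_on (\<sigma>' j) {..<n} \<and> (\<forall>a<n. (a, \<sigma>' j a) \<in> G) \<and>
              (\<forall>j'<Suc k. j' \<noteq> j \<longrightarrow> (\<forall>a<n. \<sigma>' j a \<noteq> \<sigma>' j' a))"
  proof (intro allI impI)
    fix j assume j: "j < Suc k"
    have i1: "inj_on (\<sigma>' j) {..<n}"
    proof (cases "j = k")
      case True
      have "\<sigma>' j = \<tau>" unfolding \<sigma>'_def True by (rule fun_upd_same)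
      then show ?thesis using \<tau>(1) by (simp only:)
    next
      case False
      hence jk: "j < k" using j by simp
      have "inj_on (\<sigma> j) {..<n}" using \<sigma>[rule_format, OF jk] by (rule conjunct1)
      moreover have "\<sigma>' j = \<sigma> j" unfolding \<sigma>'_def using False by (rule fun_upd_other)
      ultimately show ?thesis by (simp only:)
    qed
    have i2: "\<forall>a<n. (a, \<sigma>' j a) \<in> G"
    proof (cases "j = k")
      case True
      have "G' \<subseteq> G" unfolding G'_def by blast
      then show ?thesis using \<tau>(2) True unfolding \<sigma>'_def by auto
    next
      case False
      hence jk: "j < k" using j by simp
      have "\<forall>a<n. (a, \<sigma> j a) \<in> G" using \<sigma>[rule_format, OF jk] by simp
      thus ?thesis using False unfolding \<sigma>'_def by simp
    qed
    have i3: "\<forall>j'<Suc k. j' \<noteq> j \<longrightarrow> (\<forall>a<n. \<sigma>' j a \<noteq> \<sigma>' j' a)"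
    proof (intro allI impI)
      fix j' a assume j': "j' < Suc k" "j' \<noteq> j" and a: "a < n"
      show "\<sigma>' j a \<noteq> \<sigma>' j' a"
      proof (cases "j = k")
        case True
        hence "j' < k" using j' by simp
        thus ?thesis using nR[of j' a] a True j' unfolding \<sigma>'_def by simp
      next
        case False
        hence jk: "j < k" using j by simp
        show ?thesis
        proof (cases "j' = k")
          case True thus ?thesis using nR[OF jk a] False unfolding \<sigma>'_def by simp
        next
          case False2: False
          hence "j' < k" using j' by simp
          hence "\<sigma> j a \<noteq> \<sigma> j' a" using \<sigma> jk j' a by blast
          thus ?thesis using False False2 unfolding \<sigma>'_def by simp
        qed
      qed
    qed
    show "inj_on (\<sigma>' j) {..<n} \<and> (\<forall>a<n. (a, \<sigma>' j a) \<in> G) \<and>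
              (\<forall>j'<Suc k. j' \<noteq> j \<longrightarrow> (\<forall>a<n. \<sigma>' j a \<noteq> \<sigma>' j' a))" using i1 i2 i3 by blast
  qed
  thus ?case by blast
qed


lemma modinj:
  fixes x y t n :: nat
  assumes "x < n" "y < n" "(x + t) mod n = (y + t) mod n"
  shows "x = y"
proof -
  have "[x + t = y + t] (mod n)" using assms(3) unfolding cong_def .
  hence "[x = y] (mod n)" using cong_add_rcancel_nat by blast
  thus ?thesis using assms(1,2) unfolding cong_def by simp
qed

lemma modinj2:
  fixes b t t' n :: nat
  assumes "t < n" "t' < n" "(b + t) mod n = (b + t') mod n"
  shows "t = t'"
  using modinj[of t n t' b] assms by (simp add: add.commute)

lemma shift_surj:
  fixes t n :: nat
  assumes "0 < n"
  shows "(\<lambda>b. (b + t) mod n) ` {..<n} = {..<n}"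
proof (rule endo_inj_surj)
  show "(\<lambda>b. (b + t) mod n) ` {..<n} \<subseteq> {..<n}" using assms by auto
  show "inj_on (\<lambda>b. (b + t) mod n) {..<n}" by (rule inj_onI) (use modinj in auto)
qed simp

definition Gr :: "nat \<Rightarrow> (nat \<times> nat \<times> nat) set \<Rightarrow> nat \<Rightarrow> (nat \<times> nat) set" where
  "Gr n H t = {(a,b). a < n \<and> b < n \<and> (a, b, (b + t) mod n) \<in> H}"

definition Good :: "nat \<Rightarrow> (nat \<times> nat \<times> nat) set \<Rightarrow> bool" where
  "Good n H \<longleftrightarrow>
    (\<forall>t<n. \<forall>a<n. real n / 4 < real (card {b. (a,b) \<in> Gr n H t})) \<and>
    (\<forall>t<n. \<forall>b<n. real n / 4 < real (card {a. (a,b) \<in> Gr n H t})) \<and>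
    (\<forall>t<n. \<forall>A B. A \<subseteq> {..<n} \<longrightarrow> B \<subseteq> {..<n} \<longrightarrow> card A = n div 8 \<longrightarrow> card B = n div 8 \<longrightarrow>
        real (n div 8) ^ 2 / 4 < real (card ((A \<times> B) \<inter> Gr n H t)))"

lemma good_imp:
  assumes n: "64 \<le> n" and G: "Good n H"
  shows "\<exists>F. (\<forall>M\<in>F. perfect_matching n H M) \<and>
               (\<forall>M\<in>F. \<forall>M'\<in>F. M \<noteq> M' \<longrightarrow> M \<inter> M' = {}) \<and>
               finite F \<and> real (card F) \<ge> 1/64 * real n ^ 2"
proof -
  define s where "s = n div 8"
  define k where "k = s div 4"
  have n0: "0 < n" using n by simp
  have s1: "1 \<le> s" using n unfolding s_def by simp
  have "s * 8 \<le> n" unfolding s_def by simp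
  hence sn: "real s \<le> real n / 8" by linarith
  have "k * 4 \<le> s" unfolding k_def by simp
  hence kk: "real k \<le> real s / 4" by linarith
  have "\<forall>t\<in>{..<n}. \<exists>\<sigma>. \<forall>j<k. inj_on (\<sigma> j) {..<n} \<and> (\<forall>a<n. (a, \<sigma> j a) \<in> Gr n H t) \<and>
              (\<forall>j'<k. j' \<noteq> j \<longrightarrow> (\<forall>a<n. \<sigma> j a \<noteq> \<sigma> j' a))"
  proof
    fix t assume "t \<in> {..<n}"
    hence t: "t < n" by simp
    have g1: "Gr n H t \<subseteq> {..<n} \<times> {..<n}" unfolding Gr_def by auto
    have g2: "\<forall>a<n. real n / 4 < real (card {b. (a,b) \<in> Gr n H t})" using G t unfolding Good_def by blast
    have g3: "\<forall>b<n. real n / 4 < real (card {a. (a,b) \<in> Gr n H t})" using G t unfolding Good_def by blast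
    have g4: "\<forall>A B. A \<subseteq> {..<n} \<longrightarrow> B \<subseteq> {..<n} \<longrightarrow> card A = s \<longrightarrow> card B = s \<longrightarrow>
                real s ^ 2 / 4 < real (card ((A \<times> B) \<inter> Gr n H t))"
      using G t unfolding Good_def s_def by blast
    show "\<exists>\<sigma>. \<forall>j<k. inj_on (\<sigma> j) {..<n} \<and> (\<forall>a<n. (a, \<sigma> j a) \<in> Gr n H t) \<and>
              (\<forall>j'<k. j' \<noteq> j \<longrightarrow> (\<forall>a<n. \<sigma> j a \<noteq> \<sigma> j' a))"
      by (rule many_pm[OF g1 s1 sn g2 g3 g4 kk])
  qed
  then obtain S where S: "\<forall>t\<in>{..<n}. \<forall>j<k. inj_on (S t j) {..<n} \<and> (\<forall>a<n. (a, S t j a) \<in> Gr n H t) \<and>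
              (\<forall>j'<k. j' \<noteq> j \<longrightarrow> (\<forall>a<n. S t j a \<noteq> S t j' a))"
    by (rule bchoice[elim_format]) blast
  have Sinj: "inj_on (S t j) {..<n}" if "t < n" "j < k" for t j using S that by blast
  have SG: "(a, S t j a) \<in> Gr n H t" if "t < n" "j < k" "a < n" for t j a using S that by blast
  have Sdist: "S t j a \<noteq> S t j' a" if "t < n" "j < k" "j' < k" "j \<noteq> j'" "a < n" for t j j' a
    using S that by blast
  have Slt: "S t j a < n" if "t < n" "j < k" "a < n" for t j a using SG[OF that] unfolding Gr_def by auto
  have SH: "(a, S t j a, (S t j a + t) mod n) \<in> H" if "t < n" "j < k" "a < n" for t j a
    using SG[OF that] unfolding Gr_def by auto
  have Ssurj: "S t j ` {..<n} = {..<n}" if "t < n" "j < k" for t j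
    by (rule endo_inj_surj) (use Slt[OF that] Sinj[OF that] in auto)
  define tr where "tr = (\<lambda>t j a. (a, S t j a, (S t j a + t) mod n))"
  define M where "M = (\<lambda>t j. tr t j ` {..<n})"
  define F where "F = (\<lambda>(t,j). M t j) ` ({..<n} \<times> {..<k})"
  have pm: "perfect_matching n H (M t j)" if tj: "t < n" "j < k" for t j
    unfolding perfect_matching_def
  proof (intro conjI)
    show "M t j \<subseteq> H" unfolding M_def tr_def using SH[OF tj] by auto
    show "\<forall>e\<in>M t j. \<forall>f\<in>M t j. e \<noteq> f \<longrightarrow> verts e \<inter> verts f = {}"
    proof (intro ballI impI)
      fix e f assume e: "e \<in> M t j" and f: "f \<in> M t j" and ef: "e \<noteq> f"
      obtain a where a: "a < n" "e = tr t j a" using e unfolding M_def by auto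
      obtain a' where a': "a' < n" "f = tr t j a'" using f unfolding M_def by auto
      have aa: "a \<noteq> a'" using a a' ef by auto
      have bb: "S t j a \<noteq> S t j a'" using aa Sinj[OF tj] a(1) a'(1) by (auto dest: inj_onD)
      have cc: "(S t j a + t) mod n \<noteq> (S t j a' + t) mod n"
        using bb modinj[OF Slt[OF tj a(1)] Slt[OF tj a'(1)]] by blast
      show "verts e \<inter> verts f = {}" using aa bb cc unfolding a(2) a'(2) tr_def by auto
    qed
    show "(\<Union>e\<in>M t j. verts e) = vertices n"
    proof
      show "(\<Union>e\<in>M t j. verts e) \<subseteq> vertices n"
        unfolding M_def tr_def vertices_def using Slt[OF tj] n0 by auto
      show "vertices n \<subseteq> (\<Union>e\<in>M t j. verts e)"
      proof
        fix v assume "v \<in> vertices n"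
        then obtain i x where v: "v = (i,x)" "i \<in> {0,1,2}" "x < n" unfolding vertices_def by auto
        have "i = 0 \<or> i = 1 \<or> i = 2" using v by auto
        then show "v \<in> (\<Union>e\<in>M t j. verts e)"
        proof (elim disjE)
          assume "i = 0"
          hence "v \<in> verts (tr t j x)" unfolding v tr_def by simp
          thus ?thesis using v unfolding M_def by blast
        next
          assume "i = 1"
          have "x \<in> S t j ` {..<n}" using Ssurj[OF tj] v(3) by simp
          then obtain a where a: "a < n" "S t j a = x" by auto
          hence "v \<in> verts (tr t j a)" unfolding v tr_def using \<open>i = 1\<close> by simp
          thus ?thesis using a unfolding M_def by blast
        next
          assume "i = 2"
          have "x \<in> (\<lambda>b. (b + t) mod n) ` {..<n}" using shift_surj[OF n0, of t] v(3) by simp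
          then obtain y where y: "y < n" "(y + t) mod n = x" by auto
          have "y \<in> S t j ` {..<n}" using Ssurj[OF tj] y(1) by simp
          then obtain a where a: "a < n" "S t j a = y" by auto
          hence "v \<in> verts (tr t j a)" unfolding v tr_def using \<open>i = 2\<close> y by simp
          thus ?thesis using a unfolding M_def by blast
        qed
      qed
    qed
  qed
  have disj: "M t j \<inter> M t' j' = {}" if "t < n" "j < k" "t' < n" "j' < k" "(t,j) \<noteq> (t',j')" for t j t' j'
  proof (rule ccontr)
    assume "M t j \<inter> M t' j' \<noteq> {}"
    then obtain e where e: "e \<in> M t j" "e \<in> M t' j'" by blast
    obtain a where ea: "a < n" "e = tr t j a" using e(1) unfolding M_def by auto
    obtain a' where ea': "a' < n" "e = tr t' j' a'" using e(2) unfolding M_def by auto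
    have a: "a < n" "a' < n" "tr t j a = tr t' j' a'" using ea ea' by auto
    hence a1: "a = a'" and b1: "S t j a = S t' j' a" and c1: "(S t j a + t) mod n = (S t' j' a + t') mod n"
      unfolding tr_def by auto
    have "t = t'" using modinj2[OF that(1,3)] c1 b1 by simp
    hence "j \<noteq> j'" using that(5) by simp
    thus False using Sdist[OF that(1,2) _ _ a(1), of j'] that b1 \<open>t = t'\<close> by simp
  qed
  have ne: "M t j \<noteq> {}" for t j using n0 unfolding M_def by auto
  have inj: "inj_on (\<lambda>(t,j). M t j) ({..<n} \<times> {..<k})"
  proof (rule inj_onI)
    fix x y assume x: "x \<in> {..<n} \<times> {..<k}" and y: "y \<in> {..<n} \<times> {..<k}"
      and xy: "(\<lambda>(t,j). M t j) x = (\<lambda>(t,j). M t j) y"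
    obtain t j where x': "x = (t,j)" "t < n" "j < k" using x by auto
    obtain t' j' where y': "y = (t',j')" "t' < n" "j' < k" using y by auto
    show "x = y"
    proof (rule ccontr)
      assume "x \<noteq> y"
      hence "M t j \<inter> M t' j' = {}" using disj x' y' by simp
      moreover have "M t j = M t' j'" using xy x' y' by simp
      ultimately show False using ne by simp
    qed
  qed
  have cardF: "card F = n * k" unfolding F_def using card_image[OF inj] by simp
  have "n div 32 * 32 + 31 \<ge> n" by simp
  moreover have "k = n div 32" unfolding k_def s_def by (simp add: div_mult2_eq)
  ultimately have "real k * 32 + 31 \<ge> real n" by linarith
  hence "real k \<ge> real n / 64" using n by linarith
  hence "real n * real k \<ge> real n * (real n / 64)" by (intro mult_left_mono) auto
  hence cF: "real (card F) \<ge> 1/64 * real n ^ 2" unfolding cardF by (simp add: power2_eq_square)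
  have "\<forall>M\<in>F. perfect_matching n H M" unfolding F_def using pm by auto
  moreover have "\<forall>M\<in>F. \<forall>M'\<in>F. M \<noteq> M' \<longrightarrow> M \<inter> M' = {}"
  proof (intro ballI impI)
    fix X Y assume "X \<in> F" "Y \<in> F" "X \<noteq> Y"
    then obtain t j t' j' where "X = M t j" "Y = M t' j'" "t < n" "j < k" "t' < n" "j' < k"
      unfolding F_def by auto
    thus "X \<inter> Y = {}" using disj \<open>X \<noteq> Y\<close> by blast
  qed
  moreover have "finite F" unfolding F_def by simp
  ultimately show ?thesis using cF by blast
qed


lemma prob_bad':
  assumes "finite D" "D \<noteq> {}" "inj_on \<phi> D" "\<phi> ` D \<subseteq> triples n"
  shows "measure_pmf.prob (random_hypergraph n) {H. real (card {d\<in>D. \<phi> d \<in> H}) \<le> real (card D) / 4}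
           \<le> exp (- real (card D) / 8)"
proof -
  have c: "card (\<phi> ` D) = card D" using assms(3) by (rule card_image)
  have e: "card (H \<inter> \<phi> ` D) = card {d\<in>D. \<phi> d \<in> H}" for H
  proof -
    have "H \<inter> \<phi> ` D = \<phi> ` {d\<in>D. \<phi> d \<in> H}" by auto
    moreover have "inj_on \<phi> {d\<in>D. \<phi> d \<in> H}" using assms(3) by (rule inj_on_subset) auto
    ultimately show ?thesis by (simp add: card_image)
  qed
  have "\<phi> ` D \<noteq> {}" using assms(2) by simp
  thus ?thesis using prob_bad[of "\<phi> ` D" n] assms(4) c e by simp
qed

definition bnd :: "nat \<Rightarrow> real" where
  "bnd n = 2 * real n ^ 2 * exp (- real n / 8) + real n * 4 ^ n * exp (- (((real n / 8 - 1) ^ 2) / 8))"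

lemma prob_notgood:
  assumes n: "64 \<le> n"
  shows "measure_pmf.prob (random_hypergraph n) {H. \<not> Good n H} \<le> bnd n"
proof -
  define R where "R = random_hypergraph n"
  define s where "s = n div 8"
  have n0: "0 < n" using n by simp
  have s1: "1 \<le> s" using n unfolding s_def by simp
  define B1 where "B1 = (\<lambda>(t,a). {H::(nat\<times>nat\<times>nat) set. real (card {b\<in>{..<n}. (a,b,(b+t) mod n) \<in> H}) \<le> real (card {..<n}) / 4})"
  define B2 where "B2 = (\<lambda>(t,b). {H::(nat\<times>nat\<times>nat) set. real (card {a\<in>{..<n}. (a,b,(b+t) mod n) \<in> H}) \<le> real (card {..<n}) / 4})"
  define B3 where "B3 = (\<lambda>(t,A,B). {H::(nat\<times>nat\<times>nat) set. real (card {d\<in>A\<times>B. (\<lambda>(a,b). (a,b,(b+t) mod n)) d \<in> H})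
                                        \<le> real (card (A\<times>B)) / 4})"
  define Sub where "Sub = {A. A \<subseteq> {..<n} \<and> card A = s}"
  define I1 where "I1 = {..<n} \<times> {..<n}"
  define I3 where "I3 = {..<n} \<times> Sub \<times> Sub"
  have finI1: "finite I1" unfolding I1_def by simp
  have finSub: "finite Sub" unfolding Sub_def by (rule finite_subset[of _ "Pow {..<n}"]) auto
  have finI3: "finite I3" unfolding I3_def using finSub by simp
  have sub: "{H. \<not> Good n H} \<subseteq> (\<Union>i\<in>I1. B1 i) \<union> (\<Union>i\<in>I1. B2 i) \<union> (\<Union>i\<in>I3. B3 i)"
  proof
    fix H assume "H \<in> {H. \<not> Good n H}"
    hence "\<not> Good n H" by simp
    then consider (c1) t a where "t < n" "a < n" "\<not> real n / 4 < real (card {b. (a,b) \<in> Gr n H t})"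
      | (c2) t b where "t < n" "b < n" "\<not> real n / 4 < real (card {a. (a,b) \<in> Gr n H t})"
      | (c3) t A B where "t < n" "A \<subseteq> {..<n}" "B \<subseteq> {..<n}" "card A = s" "card B = s"
          "\<not> real s ^ 2 / 4 < real (card ((A \<times> B) \<inter> Gr n H t))"
      unfolding Good_def s_def by blast
    then show "H \<in> (\<Union>i\<in>I1. B1 i) \<union> (\<Union>i\<in>I1. B2 i) \<union> (\<Union>i\<in>I3. B3 i)"
    proof cases
      case c1
      have "{b. (a,b) \<in> Gr n H t} = {b\<in>{..<n}. (a,b,(b+t) mod n) \<in> H}" using c1 unfolding Gr_def by auto
      hence "H \<in> B1 (t,a)" using c1 unfolding B1_def by simp
      moreover have "(t,a) \<in> I1" using c1 unfolding I1_def by simp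
      ultimately show ?thesis by blast
    next
      case c2
      have "{a. (a,b) \<in> Gr n H t} = {a\<in>{..<n}. (a,b,(b+t) mod n) \<in> H}" using c2 unfolding Gr_def by auto
      hence "H \<in> B2 (t,b)" using c2 unfolding B2_def by simp
      moreover have "(t,b) \<in> I1" using c2 unfolding I1_def by simp
      ultimately show ?thesis by blast
    next
      case c3
      have "(A \<times> B) \<inter> Gr n H t = {d\<in>A\<times>B. (\<lambda>(a,b). (a,b,(b+t) mod n)) d \<in> H}"
        using c3 unfolding Gr_def by auto
      moreover have "card (A \<times> B) = s * s" using c3 by (simp add: card_cartesian_product)
      ultimately have "H \<in> B3 (t,A,B)" using c3 unfolding B3_def by (simp add: power2_eq_square)
      moreover have "(t,A,B) \<in> I3" using c3 unfolding I3_def Sub_def by simp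
      ultimately show ?thesis by blast
    qed
  qed
  have b1: "measure_pmf.prob R (B1 i) \<le> exp (- real n / 8)" if iI: "i \<in> I1" for i
  proof -
    obtain t a where i: "i = (t,a)" "t < n" "a < n" using iI unfolding I1_def by auto
    have "measure_pmf.prob R {H. real (card {b\<in>{..<n}. (\<lambda>b. (a,b,(b+t) mod n)) b \<in> H}) \<le> real (card {..<n}) / 4}
          \<le> exp (- real (card {..<n}) / 8)"
      unfolding R_def by (rule prob_bad') (use n0 i in \<open>auto simp: inj_on_def triples_def\<close>)
    thus ?thesis unfolding i B1_def by simp
  qed
  have b2: "measure_pmf.prob R (B2 i) \<le> exp (- real n / 8)" if iI: "i \<in> I1" for i
  proof -
    obtain t b where i: "i = (t,b)" "t < n" "b < n" using iI unfolding I1_def by auto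
    have "measure_pmf.prob R {H. real (card {a\<in>{..<n}. (\<lambda>a. (a,b,(b+t) mod n)) a \<in> H}) \<le> real (card {..<n}) / 4}
          \<le> exp (- real (card {..<n}) / 8)"
      unfolding R_def by (rule prob_bad') (use n0 i in \<open>auto simp: inj_on_def triples_def\<close>)
    thus ?thesis unfolding i B2_def by simp
  qed
  have "s * 8 + 7 \<ge> n" unfolding s_def by simp
  hence sge: "real n / 8 - 1 \<le> real s" by linarith
  have sq: "(real n / 8 - 1) ^ 2 \<le> real (s * s)"
  proof -
    have "0 \<le> real n / 8 - 1" using n by simp
    hence "(real n / 8 - 1) ^ 2 \<le> real s ^ 2" using sge by (intro power_mono) auto
    thus ?thesis by (simp add: power2_eq_square)
  qed
  have b3: "measure_pmf.prob R (B3 i) \<le> exp (- (((real n / 8 - 1) ^ 2) / 8))" if iI: "i \<in> I3" for i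
  proof -
    obtain t A B where i: "i = (t,A,B)" "t < n" "A \<subseteq> {..<n}" "B \<subseteq> {..<n}" "card A = s" "card B = s"
      using iI unfolding I3_def Sub_def by auto
    have finA: "finite A" "finite B" using i finite_subset by blast+
    have cAB: "card (A \<times> B) = s * s" using i by (simp add: card_cartesian_product)
    have "A \<noteq> {}" "B \<noteq> {}" using i(5,6) s1 by auto
    hence ne: "A \<times> B \<noteq> {}" by simp
    have "measure_pmf.prob R {H. real (card {d\<in>A\<times>B. (\<lambda>(a,b). (a,b,(b+t) mod n)) d \<in> H}) \<le> real (card (A\<times>B)) / 4}
          \<le> exp (- real (card (A\<times>B)) / 8)"
      unfolding R_def by (rule prob_bad') (use finA ne i in \<open>auto simp: inj_on_def triples_def n0\<close>)
    also have "\<dots> \<le> exp (- (((real n / 8 - 1) ^ 2) / 8))" using sq unfolding cAB by simp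
    finally show ?thesis unfolding i B3_def by simp
  qed
  have cI1: "card I1 = n * n" unfolding I1_def by (simp add: card_cartesian_product)
  have cSub: "card Sub = n choose s" unfolding Sub_def using n_subsets[of "{..<n}" s] by simp
  have cI3: "card I3 = n * ((n choose s) * (n choose s))" unfolding I3_def using cSub
    by (simp add: card_cartesian_product)
  have "(n choose s) * (n choose s) \<le> 2 ^ n * 2 ^ n" using binomial_le_pow2 by (intro mult_le_mono) auto
  also have "(2::nat) ^ n * 2 ^ n = 4 ^ n" by (simp add: power_mult_distrib[symmetric])
  finally have "card I3 \<le> n * 4 ^ n" unfolding cI3 by simp
  hence cI3': "real (card I3) \<le> real n * 4 ^ n" by (metis of_nat_le_iff of_nat_mult of_nat_numeral of_nat_power)
  have u1: "measure_pmf.prob R (\<Union>i\<in>I1. B1 i) \<le> real n ^ 2 * exp (- real n / 8)"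
  proof -
    have "measure_pmf.prob R (\<Union>i\<in>I1. B1 i) \<le> (\<Sum>i\<in>I1. measure_pmf.prob R (B1 i))"
      by (rule measure_pmf.finite_measure_subadditive_finite) (use finI1 in auto)
    also have "\<dots> \<le> of_nat (card I1) * exp (- real n / 8)" by (rule sum_bounded_above) (use b1 in auto)
    finally show ?thesis unfolding cI1 by (simp add: power2_eq_square)
  qed
  have u2: "measure_pmf.prob R (\<Union>i\<in>I1. B2 i) \<le> real n ^ 2 * exp (- real n / 8)"
  proof -
    have "measure_pmf.prob R (\<Union>i\<in>I1. B2 i) \<le> (\<Sum>i\<in>I1. measure_pmf.prob R (B2 i))"
      by (rule measure_pmf.finite_measure_subadditive_finite) (use finI1 in auto)
    also have "\<dots> \<le> of_nat (card I1) * exp (- real n / 8)" by (rule sum_bounded_above) (use b2 in auto)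
    finally show ?thesis unfolding cI1 by (simp add: power2_eq_square)
  qed
  have u3: "measure_pmf.prob R (\<Union>i\<in>I3. B3 i) \<le> real n * 4 ^ n * exp (- (((real n / 8 - 1) ^ 2) / 8))"
  proof -
    have "measure_pmf.prob R (\<Union>i\<in>I3. B3 i) \<le> (\<Sum>i\<in>I3. measure_pmf.prob R (B3 i))"
      by (rule measure_pmf.finite_measure_subadditive_finite) (use finI3 in auto)
    also have "\<dots> \<le> of_nat (card I3) * exp (- (((real n / 8 - 1) ^ 2) / 8))"
      by (rule sum_bounded_above) (use b3 in auto)
    also have "\<dots> \<le> real n * 4 ^ n * exp (- (((real n / 8 - 1) ^ 2) / 8))"
      by (rule mult_right_mono) (use cI3' in auto)
    finally show ?thesis .
  qed
  have "measure_pmf.prob R {H. \<not> Good n H}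
        \<le> measure_pmf.prob R ((\<Union>i\<in>I1. B1 i) \<union> (\<Union>i\<in>I1. B2 i) \<union> (\<Union>i\<in>I3. B3 i))"
    by (rule measure_pmf.finite_measure_mono[OF sub]) simp
  also have "\<dots> \<le> measure_pmf.prob R ((\<Union>i\<in>I1. B1 i) \<union> (\<Union>i\<in>I1. B2 i)) + measure_pmf.prob R (\<Union>i\<in>I3. B3 i)"
    by (rule measure_Un_le) simp_all
  also have "measure_pmf.prob R ((\<Union>i\<in>I1. B1 i) \<union> (\<Union>i\<in>I1. B2 i))
      \<le> measure_pmf.prob R (\<Union>i\<in>I1. B1 i) + measure_pmf.prob R (\<Union>i\<in>I1. B2 i)"
    by (rule measure_Un_le) simp_all
  finally have "measure_pmf.prob R {H. \<not> Good n H} \<le> real n ^ 2 * exp (- real n / 8) + real n ^ 2 * exp (- real n / 8)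
      + real n * 4 ^ n * exp (- (((real n / 8 - 1) ^ 2) / 8))" using u1 u2 u3 by linarith
  thus ?thesis unfolding R_def bnd_def by simp
qed

lemma bnd_lim: "bnd \<longlonglongrightarrow> 0"
proof -
  have "(\<lambda>n::nat. 2 * real n ^ 2 * exp (- real n / 8) + real n * 4 ^ n * exp (- (((real n / 8 - 1) ^ 2) / 8))) \<longlonglongrightarrow> 0"
    by real_asymp
  thus ?thesis unfolding bnd_def[abs_def] .
qed

theorem lemma7p2:
  shows "\<exists>\<gamma>::real. \<gamma> > 0 \<and>
    (\<lambda>n. measure_pmf.prob (random_hypergraph n)
       {H. \<exists>F. (\<forall>M\<in>F. perfect_matching n H M) \<and>
               (\<forall>M\<in>F. \<forall>M'\<in>F. M \<noteq> M' \<longrightarrow> M \<inter> M' = {}) \<and>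
               finite F \<and> real (card F) \<ge> \<gamma> * real n ^ 2})
    \<longlonglongrightarrow> 1"
proof (rule exI[of _ "1/64"], intro conjI)
  show "(1/64::real) > 0" by simp
  define T where "T = (\<lambda>n. {H. \<exists>F. (\<forall>M\<in>F. perfect_matching n H M) \<and>
               (\<forall>M\<in>F. \<forall>M'\<in>F. M \<noteq> M' \<longrightarrow> M \<inter> M' = {}) \<and>
               finite F \<and> real (card F) \<ge> 1/64 * real n ^ 2})"
  have lo: "1 - bnd n \<le> measure_pmf.prob (random_hypergraph n) (T n)" if n: "64 \<le> n" for n
  proof -
    have "{H. Good n H} \<subseteq> T n" unfolding T_def using good_imp[OF n] by blast
    hence "measure_pmf.prob (random_hypergraph n) {H. Good n H} \<le> measure_pmf.prob (random_hypergraph n) (T n)"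
      by (rule measure_pmf.finite_measure_mono) simp
    moreover have "measure_pmf.prob (random_hypergraph n) {H. Good n H}
        = 1 - measure_pmf.prob (random_hypergraph n) {H. \<not> Good n H}"
    proof -
      have "{H. Good n H} = space (measure_pmf (random_hypergraph n)) - {H. \<not> Good n H}" by auto
      moreover have "measure_pmf.prob (random_hypergraph n) (space (measure_pmf (random_hypergraph n)) - {H. \<not> Good n H})
          = 1 - measure_pmf.prob (random_hypergraph n) {H. \<not> Good n H}"
        by (rule measure_pmf.prob_compl) simp
      ultimately show ?thesis by simp
    qed
    ultimately show ?thesis using prob_notgood[OF n] by linarith
  qed
  have "(\<lambda>n. measure_pmf.prob (random_hypergraph n) (T n)) \<longlonglongrightarrow> 1"
  proof (rule tendsto_sandwich[of "\<lambda>n. 1 - bnd n" _ sequentially "\<lambda>n. 1"])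
    show "\<forall>\<^sub>F n in sequentially. 1 - bnd n \<le> measure_pmf.prob (random_hypergraph n) (T n)"
      unfolding eventually_sequentially using lo by blast
    show "\<forall>\<^sub>F n in sequentially. measure_pmf.prob (random_hypergraph n) (T n) \<le> 1" by simp
    show "(\<lambda>n. 1 - bnd n) \<longlonglongrightarrow> 1" using tendsto_diff[OF tendsto_const bnd_lim, of 1] by simp
  qed simp
  thus "(\<lambda>n. measure_pmf.prob (random_hypergraph n)
       {H. \<exists>F. (\<forall>M\<in>F. perfect_matching n H M) \<and>
               (\<forall>M\<in>F. \<forall>M'\<in>F. M \<noteq> M' \<longrightarrow> M \<inter> M' = {}) \<and>
               finite F \<and> real (card F) \<ge> 1/64 * real n ^ 2}) \<longlonglongrightarrow> 1" unfolding T_def .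
qed

end
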